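(* For every $N_0\in\mathbb{N}$ there exists an instance of the binary voting game (as described in the context) with $N>N_0$ agents in which no strong Bayes Nash Equilibrium exists, i.e. no strategy profile is a $0$-strong Bayes Nash Equilibrium.
   Context: Binary voting game. $N$ agents each vote for one of two alternatives $\mathbf{A}$ or $\mathbf{R}$. There is an unobserved world state $W\in\{L,H\}$ with common prior $P_L=\Pr[W=L]>0$, $P_H=\Pr[W=H]>0$. Conditional on $W$, each agent $n$ independently receives a private signal $S_n\in\{l,h\}$ with $P_{sw}=\Pr[S_n=s\mid W=w]$ (identical across agents), where $P_{hH}>P_{hL}$ and $P_{lH}<P_{lL}$. For a threshold $\mu\in(0,1)$, $\mathbf{A}$ wins iff at least $\mu N$ agents vote for $\mathbf{A}$; otherwise $\mathbf{R}$ wins. Each agent $n$ has a utility $v_n:\{L,H\}\times\{\mathbf{A},\mathbf{R}\}\to\{0,1,\dots,B\}$ ($B$ a positive integer) with $v_n(H,\mathbf{A})>v_n(L,\mathbf{A})$ and $v_n(H,\mathbf{R})<v_n(L,\mathbf{R})$. A (mixed) strategy of an agent is a map from her signal to a distribution over $\{\mathbf{A},\mathbf{R}\}$, written $\sigma=(\beta_l,\beta_h)$ where $\beta_s$ is the probability of voting $\mathbf{A}$ on signal $s$; a strategy profile is $\Sigma=(\sigma_1,\dots,\sigma_N)$. Let $\lambda^{\mathbf{A}}_w(\Sigma)$, $\lambda^{\mathbf{R}}_w(\Sigma)$ be the (ex-ante) probabilities that $\mathbf{A}$, resp. $\mathbf{R}$, wins when the state is $w$. The ex-ante expected utility of agent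 $n$ is $u_n(\Sigma)=\sum_{w\in\{L,H\}}P_w\big(\lambda^{\mathbf{A}}_w(\Sigma)v_n(w,\mathbf{A})+\lambda^{\mathbf{R}}_w(\Sigma)v_n(w,\mathbf{R})\big)$. A profile $\Sigma$ is an $\varepsilon$-strong Bayes Nash Equilibrium if there is no set $D$ of agents and profile $\Sigma'$ such that $\sigma'_n=\sigma_n$ for all $n\notin D$, $u_n(\Sigma')\ge u_n(\Sigma)$ for all $n\in D$, and $u_n(\Sigma')>u_n(\Sigma)+\varepsilon$ for some $n\in D$. A strong Bayes Nash Equilibrium is a $0$-strong Bayes Nash Equilibrium. *)

theory Defs
  imports Main "HOL.Real"
begin

datatype world = L | H
datatype signal = l | h
datatype alt = Acc | Rej

text \<open>A mixed strategy of agent n is a map from signals to the probability of voting for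
  alternative A (Acc); a profile assigns strategies to agents 0..N-1.\<close>
type_synonym profile = "nat \<Rightarrow> signal \<Rightarrow> real"

definition valid_profile :: "nat \<Rightarrow> profile \<Rightarrow> bool" where
  "valid_profile N \<Sigma> \<longleftrightarrow> (\<forall>n<N. \<forall>s. 0 \<le> \<Sigma> n s \<and> \<Sigma> n s \<le> 1)"

text \<open>Probability that agent n votes A given state w (signals P s w = Pr[S_n = s | W = w]).\<close>
definition voteA_prob :: "(signal \<Rightarrow> world \<Rightarrow> real) \<Rightarrow> profile \<Rightarrow> nat \<Rightarrow> world \<Rightarrow> real" where
  "voteA_prob P \<Sigma> n w = P l w * \<Sigma> n l + P h w * \<Sigma> n h"

definition lambdaA :: "nat \<Rightarrow> real \<Rightarrow> (signal \<Rightarrow> world \<Rightarrow> real) \<Rightarrow> profile \<Rightarrow> world \<Rightarrow> real" where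
  "lambdaA N \<mu> P \<Sigma> w =
     (\<Sum>S\<in>{S. S \<subseteq> {..<N} \<and> \<mu> * real N \<le> real (card S)}.
        (\<Prod>n\<in>S. voteA_prob P \<Sigma> n w) * (\<Prod>n\<in>{..<N} - S. 1 - voteA_prob P \<Sigma> n w))"

definition lambdaR :: "nat \<Rightarrow> real \<Rightarrow> (signal \<Rightarrow> world \<Rightarrow> real) \<Rightarrow> profile \<Rightarrow> world \<Rightarrow> real" where
  "lambdaR N \<mu> P \<Sigma> w =
     (\<Sum>S\<in>{S. S \<subseteq> {..<N} \<and> \<not> (\<mu> * real N \<le> real (card S))}.
        (\<Prod>n\<in>S. voteA_prob P \<Sigma> n w) * (\<Prod>n\<in>{..<N} - S. 1 - voteA_prob P \<Sigma> n w))"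

definition ex_ante_utility ::
  "nat \<Rightarrow> (world \<Rightarrow> real) \<Rightarrow> (signal \<Rightarrow> world \<Rightarrow> real) \<Rightarrow> real \<Rightarrow>
   (nat \<Rightarrow> world \<Rightarrow> alt \<Rightarrow> nat) \<Rightarrow> nat \<Rightarrow> profile \<Rightarrow> real" where
  "ex_ante_utility N Pw P \<mu> v n \<Sigma> =
     (\<Sum>w\<in>{L, H}. Pw w * (lambdaA N \<mu> P \<Sigma> w * real (v n w Acc)
                          + lambdaR N \<mu> P \<Sigma> w * real (v n w Rej)))"

definition voting_instance ::
  "nat \<Rightarrow> (world \<Rightarrow> real) \<Rightarrow> (signal \<Rightarrow> world \<Rightarrow> real) \<Rightarrow> real \<Rightarrow> nat \<Rightarrow>
   (nat \<Rightarrow> world \<Rightarrow> alt \<Rightarrow> nat) \<Rightarrow> bool" where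
  "voting_instance N Pw P \<mu> B v \<longleftrightarrow>
     Pw L > 0 \<and> Pw H > 0 \<and> Pw L + Pw H = 1 \<and>
     (\<forall>s w. 0 \<le> P s w) \<and> (\<forall>w. P l w + P h w = 1) \<and>
     P h H > P h L \<and> P l H < P l L \<and>
     0 < \<mu> \<and> \<mu> < 1 \<and> B > 0 \<and>
     (\<forall>n<N. \<forall>w a. v n w a \<le> B) \<and>
     (\<forall>n<N. v n H Acc > v n L Acc \<and> v n H Rej < v n L Rej)"

definition eps_strong_BNE ::
  "nat \<Rightarrow> (world \<Rightarrow> real) \<Rightarrow> (signal \<Rightarrow> world \<Rightarrow> real) \<Rightarrow> real \<Rightarrow>
   (nat \<Rightarrow> world \<Rightarrow> alt \<Rightarrow> nat) \<Rightarrow> real \<Rightarrow> profile \<Rightarrow> bool" where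
  "eps_strong_BNE N Pw P \<mu> v \<epsilon> \<Sigma> \<longleftrightarrow>
     valid_profile N \<Sigma> \<and>
     \<not> (\<exists>D \<Sigma>'. D \<subseteq> {..<N} \<and> valid_profile N \<Sigma>' \<and>
          (\<forall>n\<in>{..<N} - D. \<Sigma>' n = \<Sigma> n) \<and>
          (\<forall>n\<in>D. ex_ante_utility N Pw P \<mu> v n \<Sigma>' \<ge> ex_ante_utility N Pw P \<mu> v n \<Sigma>) \<and>
          (\<exists>n\<in>D. ex_ante_utility N Pw P \<mu> v n \<Sigma>' > ex_ante_utility N Pw P \<mu> v n \<Sigma> + \<epsilon>))"

end

theory Submission
  imports Defs
begin


fun Q :: "(nat \<Rightarrow> real) \<Rightarrow> nat \<Rightarrow> nat \<Rightarrow> real" where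
  "Q p 0 t = (if t = 0 then 1 else 0)"
| "Q p (Suc n) t = p n * Q p n (t - 1) + (1 - p n) * Q p n t"

lemma Q_zero: "Q p n 0 = 1"
  by (induction n) auto

lemma Q_bounds: "(\<forall>i<n. 0 \<le> p i \<and> p i \<le> 1) \<Longrightarrow> 0 \<le> Q p n t \<and> Q p n t \<le> 1"
proof (induction n arbitrary: t)
  case 0 then show ?case by auto
next
  case (Suc n)
  have p: "0 \<le> p n" "p n \<le> 1" using Suc.prems by auto
  have a: "0 \<le> Q p n (t-1)" "Q p n (t-1) \<le> 1" and b: "0 \<le> Q p n t" "Q p n t \<le> 1"
    using Suc.IH Suc.prems by auto
  have "p n * Q p n (t - 1) \<le> p n * 1" using a p by (intro mult_left_mono) auto
  moreover have "(1 - p n) * Q p n t \<le> (1 - p n) * 1" using b p by (intro mult_left_mono) auto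
  moreover have "0 \<le> p n * Q p n (t - 1)" using a p by simp
  moreover have "0 \<le> (1 - p n) * Q p n t" using b p by simp
  ultimately show ?case by simp
qed

lemma Q_anti: "(\<forall>i<n. 0 \<le> p i \<and> p i \<le> 1) \<Longrightarrow> Q p n (Suc t) \<le> Q p n t"
proof (induction n arbitrary: t)
  case 0 then show ?case by auto
next
  case (Suc n)
  have p: "0 \<le> p n" "p n \<le> 1" using Suc.prems by auto
  have h1: "Q p n t \<le> Q p n (t - 1)" using Suc by (cases t) auto
  have h2: "Q p n (Suc t) \<le> Q p n t" using Suc by auto
  have "p n * Q p n t \<le> p n * Q p n (t - 1)" using h1 p by (intro mult_left_mono) auto
  moreover have "(1 - p n) * Q p n (Suc t) \<le> (1 - p n) * Q p n t" using h2 p by (intro mult_left_mono) auto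
  ultimately show ?case by simp
qed

lemma Q_anti': "(\<forall>i<n. 0 \<le> p i \<and> p i \<le> 1) \<Longrightarrow> Q p n t \<le> Q p n (t - 1)"
  using Q_anti[of n p "t-1"] by (cases t) auto

lemma Q_mono: "(\<forall>i<n. 0 \<le> p i \<and> p i \<le> p' i \<and> p' i \<le> 1) \<Longrightarrow> Q p n t \<le> Q p' n t"
proof (induction n arbitrary: t)
  case 0 then show ?case by auto
next
  case (Suc n)
  have p: "0 \<le> p n" "p n \<le> p' n" "p' n \<le> 1" using Suc.prems by auto
  have b1: "\<forall>i<n. 0 \<le> p' i \<and> p' i \<le> 1" using Suc.prems by (metis less_SucI order_trans)
  have a: "Q p n (t-1) \<le> Q p' n (t-1)" and b: "Q p n t \<le> Q p' n t" using Suc by auto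
  have c: "Q p' n t \<le> Q p' n (t-1)" using Q_anti'[OF b1] by auto
  have "p n * Q p n (t - 1) \<le> p n * Q p' n (t-1)" using a p by (intro mult_left_mono) auto
  moreover have "(1 - p n) * Q p n t \<le> (1 - p n) * Q p' n t" using b p by (intro mult_left_mono) auto
  moreover have "(p' n - p n) * (Q p' n (t-1) - Q p' n t) \<ge> 0" using p c by (intro mult_nonneg_nonneg) auto
  moreover have "p' n * Q p' n (t-1) + (1 - p' n) * Q p' n t - (p n * Q p' n (t-1) + (1 - p n) * Q p' n t) = (p' n - p n) * (Q p' n (t-1) - Q p' n t)"
    by (simp add: algebra_simps)
  ultimately show ?case by simp
qed

lemma Q_cong: "(\<forall>i<n. p i = p' i) \<Longrightarrow> Q p n t = Q p' n t"
  by (induction n arbitrary: t) auto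

lemma Q_pure: "S \<subseteq> {..<n} \<Longrightarrow> (\<forall>i<n. p i = (if i \<in> S then 1 else 0)) \<Longrightarrow>
   Q p n t = (if t \<le> card S then 1 else 0)"
proof (induction n arbitrary: S t)
  case 0 then show ?case by auto
next
  case (Suc n)
  show ?case
  proof (cases "n \<in> S")
    case True
    have S': "S - {n} \<subseteq> {..<n}" using Suc.prems(1) by auto
    have fS: "finite S" using Suc.prems(1) finite_subset by blast
    have "card S > 0" using True fS card_gt_0_iff by blast
    hence cS: "card S = Suc (card (S - {n}))" using True fS by simp
    have "\<forall>i<n. p i = (if i \<in> S - {n} then 1 else 0)" using Suc.prems(2) by auto
    hence IHt: "Q p n (t-1) = (if t - 1 \<le> card (S - {n}) then 1 else 0)" using Suc.IH[OF S'] by blast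
    have pn: "p n = 1" using Suc.prems(2) True by auto
    have "Q p (Suc n) t = Q p n (t - 1)" using pn by simp
    also have "\<dots> = (if t \<le> card S then 1 else 0)" unfolding IHt cS by (simp, arith)
    finally show ?thesis .
  next
    case False
    have S': "S \<subseteq> {..<n}"
    proof
      fix i assume "i \<in> S"
      hence "i < Suc n" "i \<noteq> n" using Suc.prems(1) False by auto
      thus "i \<in> {..<n}" by simp
    qed
    have "\<forall>i<n. p i = (if i \<in> S then 1 else 0)" using Suc.prems(2) by auto
    hence IHt: "Q p n t = (if t \<le> card S then 1 else 0)" using Suc.IH[OF S'] by blast
    have pn: "p n = 0" using Suc.prems(2) False by auto
    show ?thesis using pn IHt by simp
  qed
qed

definition W :: "(nat \<Rightarrow> real) \<Rightarrow> nat \<Rightarrow> nat set \<Rightarrow> real" where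
  "W p n S = (\<Prod>i\<in>S. p i) * (\<Prod>i\<in>{..<n} - S. 1 - p i)"

lemma W_link: "(\<Sum>S\<in>Pow {..<n}. if t \<le> card S then W p n S else 0) = Q p n t"
proof (induction n arbitrary: t)
  case 0 then show ?case by (simp add: W_def)
next
  case (Suc n)
  let ?A = "Pow {..<n}"
  have fin: "finite ?A" by simp
  have P: "Pow {..<Suc n} = ?A \<union> insert n ` ?A" by (simp add: lessThan_Suc Pow_insert)
  have disj: "?A \<inter> insert n ` ?A = {}" by auto
  have inj: "inj_on (insert n) ?A"
  proof (rule inj_onI)
    fix S T assume a: "S \<in> ?A" "T \<in> ?A" "insert n S = insert n T"
    have "n \<notin> S" "n \<notin> T" using a(1,2) by auto
    hence "S = insert n S - {n}" "T = insert n T - {n}" by auto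
    thus "S = T" using a(3) by simp
  qed
  have W1: "W p (Suc n) S = (1 - p n) * W p n S" if "S \<in> ?A" for S
  proof -
    have "{..<Suc n} - S = insert n ({..<n} - S)" using that by (auto simp: lessThan_Suc)
    moreover have "n \<notin> {..<n} - S" by auto
    ultimately show ?thesis unfolding W_def by simp
  qed
  have W2: "W p (Suc n) (insert n S) = p n * W p n S" if "S \<in> ?A" for S
  proof -
    have "{..<Suc n} - insert n S = {..<n} - S" using that by (auto simp: lessThan_Suc)
    moreover have "n \<notin> S" "finite S" using that finite_subset by auto
    ultimately show ?thesis unfolding W_def by simp
  qed
  have C2: "card (insert n S) = Suc (card S)" if "S \<in> ?A" for S
  proof -
    have "n \<notin> S" "finite S" using that finite_subset by auto
    thus ?thesis by simp
  qed
  have s0: "(\<Sum>S\<in>Pow {..<Suc n}. if t \<le> card S then W p (Suc n) S else 0)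
     = (\<Sum>S\<in>?A. if t \<le> card S then W p (Suc n) S else 0)
       + (\<Sum>S\<in>insert n ` ?A. if t \<le> card S then W p (Suc n) S else 0)"
    unfolding P by (rule sum.union_disjoint) (use disj in auto)
  have s1: "(\<Sum>S\<in>insert n ` ?A. if t \<le> card S then W p (Suc n) S else 0)
     = (\<Sum>S\<in>?A. if t \<le> card (insert n S) then W p (Suc n) (insert n S) else 0)"
    by (rule sum.reindex[OF inj, unfolded comp_def])
  have s2: "(\<Sum>S\<in>?A. if t \<le> card (insert n S) then W p (Suc n) (insert n S) else 0)
      = (\<Sum>S\<in>?A. p n * (if t - 1 \<le> card S then W p n S else 0))"
    by (rule sum.cong) (auto simp: C2 W2)
  have s3: "(\<Sum>S\<in>?A. if t \<le> card S then W p (Suc n) S else 0)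
     = (\<Sum>S\<in>?A. (1 - p n) * (if t \<le> card S then W p n S else 0))"
    by (rule sum.cong) (auto simp: W1)
  have s4: "(\<Sum>S\<in>?A. p n * (if t - 1 \<le> card S then W p n S else 0)) = p n * Q p n (t - 1)"
    by (simp only: sum_distrib_left[symmetric] Suc.IH)
  have s5: "(\<Sum>S\<in>?A. (1 - p n) * (if t \<le> card S then W p n S else 0)) = (1 - p n) * Q p n t"
    by (simp only: sum_distrib_left[symmetric] Suc.IH)
  show ?case unfolding s0 s1 s2 s3 s4 s5 by simp
qed


lemma sum_split_if:
  "(\<Sum>S\<in>A. if c S then f S else 0) + (\<Sum>S\<in>A. if \<not> c S then f S else 0) = (\<Sum>S\<in>A. f S)"
  by (simp add: sum.distrib[symmetric] if_distrib) (rule sum.cong, auto)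

lemma lamA_eq:
  assumes "\<mu> * real N = real t"
  shows "lambdaA N \<mu> P \<Sigma> w = Q (\<lambda>n. voteA_prob P \<Sigma> n w) N t"
proof -
  have e: "{S. S \<subseteq> {..<N} \<and> \<mu> * real N \<le> real (card S)} = {S \<in> Pow {..<N}. t \<le> card S}"
    using assms by auto
  have "lambdaA N \<mu> P \<Sigma> w = (\<Sum>S\<in>{S \<in> Pow {..<N}. t \<le> card S}. W (\<lambda>n. voteA_prob P \<Sigma> n w) N S)"
    unfolding lambdaA_def W_def e ..
  also have "\<dots> = (\<Sum>S\<in>Pow {..<N}. if t \<le> card S then W (\<lambda>n. voteA_prob P \<Sigma> n w) N S else 0)"
    by (rule sum.inter_filter) simp
  finally have "lambdaA N \<mu> P \<Sigma> w = (\<Sum>S\<in>Pow {..<N}. if t \<le> card S then W (\<lambda>n. voteA_prob P \<Sigma> n w) N S else 0)" .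
  thus ?thesis using W_link by simp
qed

lemma lamR_eq:
  assumes "\<mu> * real N = real t"
  shows "lambdaR N \<mu> P \<Sigma> w = 1 - Q (\<lambda>n. voteA_prob P \<Sigma> n w) N t"
proof -
  let ?p = "\<lambda>n. voteA_prob P \<Sigma> n w"
  have e0: "{S. S \<subseteq> {..<N} \<and> \<not> \<mu> * real N \<le> real (card S)} = {S \<in> Pow {..<N}. \<not> t \<le> card S}"
    using assms by auto
  have "lambdaR N \<mu> P \<Sigma> w = (\<Sum>S\<in>{S \<in> Pow {..<N}. \<not> t \<le> card S}. W ?p N S)"
    unfolding lambdaR_def W_def e0 ..
  also have "\<dots> = (\<Sum>S\<in>Pow {..<N}. if \<not> t \<le> card S then W ?p N S else 0)"
    by (rule sum.inter_filter) simp
  finally have e: "lambdaR N \<mu> P \<Sigma> w = (\<Sum>S\<in>Pow {..<N}. if \<not> t \<le> card S then W ?p N S else 0)" .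
  have tot: "(\<Sum>S\<in>Pow {..<N}. W ?p N S) = 1"
    using W_link[of 0 ?p N] Q_zero[of ?p N] by simp
  show ?thesis using sum_split_if[of "\<lambda>S. t \<le> card S" "W ?p N" "Pow {..<N}"] e tot W_link[of t ?p N] by simp
qed



definition P0 :: "signal \<Rightarrow> world \<Rightarrow> real" where
  "P0 s w = (if (s = h) = (w = H) then 3/4 else 1/4)"
definition Pw0 :: "world \<Rightarrow> real" where "Pw0 w = 1/2"
definition mu0 :: "nat \<Rightarrow> real" where "mu0 k = real (k+2) / real (2*k+3)"
definition isA :: "nat \<Rightarrow> nat \<Rightarrow> bool" where "isA k n \<longleftrightarrow> n < k \<or> n = 2*k+1"
definition isR :: "nat \<Rightarrow> nat \<Rightarrow> bool" where "isR k n \<longleftrightarrow> (k \<le> n \<and> n < 2*k) \<or> n = 2*k"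
definition vA :: "world \<Rightarrow> alt \<Rightarrow> nat" where
  "vA w a = (case w of L \<Rightarrow> (case a of Acc \<Rightarrow> 2 | Rej \<Rightarrow> 1) | H \<Rightarrow> (case a of Acc \<Rightarrow> 3 | Rej \<Rightarrow> 0))"
definition vR :: "world \<Rightarrow> alt \<Rightarrow> nat" where
  "vR w a = (case w of L \<Rightarrow> (case a of Acc \<Rightarrow> 0 | Rej \<Rightarrow> 3) | H \<Rightarrow> (case a of Acc \<Rightarrow> 1 | Rej \<Rightarrow> 2))"
definition vI :: "world \<Rightarrow> alt \<Rightarrow> nat" where
  "vI w a = (case w of L \<Rightarrow> (case a of Acc \<Rightarrow> 0 | Rej \<Rightarrow> 2) | H \<Rightarrow> (case a of Acc \<Rightarrow> 1 | Rej \<Rightarrow> 0))"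
definition v0 :: "nat \<Rightarrow> nat \<Rightarrow> world \<Rightarrow> alt \<Rightarrow> nat" where
  "v0 k n w a = (if n = 2*k+2 then vI w a else if isA k n then vA w a else vR w a)"

definition pv :: "profile \<Rightarrow> world \<Rightarrow> nat \<Rightarrow> real" where
  "pv \<Sigma> w = (\<lambda>n. voteA_prob P0 \<Sigma> n w)"
definition lam :: "nat \<Rightarrow> profile \<Rightarrow> world \<Rightarrow> real" where
  "lam k \<Sigma> w = Q (pv \<Sigma> w) (2*k+3) (k+2)"
definition uu :: "nat \<Rightarrow> nat \<Rightarrow> profile \<Rightarrow> real" where
  "uu k n \<Sigma> = ex_ante_utility (2*k+3) Pw0 P0 (mu0 k) (v0 k) n \<Sigma>"

lemma mu0_N: "mu0 k * real (2*k+3) = real (k+2)"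
  unfolding mu0_def by simp

lemma uu_eq: "uu k n \<Sigma> = 1/2 * (lam k \<Sigma> L * v0 k n L Acc + (1 - lam k \<Sigma> L) * v0 k n L Rej)
   + 1/2 * (lam k \<Sigma> H * v0 k n H Acc + (1 - lam k \<Sigma> H) * v0 k n H Rej)"
  unfolding uu_def ex_ante_utility_def lamA_eq[OF mu0_N] lamR_eq[OF mu0_N] lam_def pv_def Pw0_def
  by simp

lemma uu_A: "isA k n \<Longrightarrow> uu k n \<Sigma> = (1 + lam k \<Sigma> L + 3 * lam k \<Sigma> H) / 2"
  unfolding uu_eq v0_def vA_def by (auto simp: isA_def algebra_simps)

lemma uu_R: "isR k n \<Longrightarrow> uu k n \<Sigma> = (5 - 3 * lam k \<Sigma> L - lam k \<Sigma> H) / 2"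
  unfolding uu_eq v0_def vR_def by (auto simp: isA_def isR_def algebra_simps)

lemma uu_I: "uu k (2*k+2) \<Sigma> = (2 - 2 * lam k \<Sigma> L + lam k \<Sigma> H) / 2"
  unfolding uu_eq v0_def vI_def by (auto simp: algebra_simps)

lemma pv_bounds: assumes "valid_profile N \<Sigma>" "i < N" shows "0 \<le> pv \<Sigma> w i \<and> pv \<Sigma> w i \<le> 1"
proof -
  have "0 \<le> \<Sigma> i l" "\<Sigma> i l \<le> 1" "0 \<le> \<Sigma> i h" "\<Sigma> i h \<le> 1"
    using assms unfolding valid_profile_def by auto
  thus ?thesis unfolding pv_def voteA_prob_def P0_def by (cases w) auto
qed

lemma pv_const: "pv (\<lambda>n. if c n then (\<lambda>s. 1) else \<Sigma> n) w i = (if c i then 1 else pv \<Sigma> w i)"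
  "pv (\<lambda>n. if c n then (\<lambda>s. 0) else \<Sigma> n) w i = (if c i then 0 else pv \<Sigma> w i)"
  unfolding pv_def voteA_prob_def P0_def by (cases w; auto)+



declare Q.simps(2)[simp del]

lemma isAR_disj: "isA k n \<Longrightarrow> \<not> isR k n"
  unfolding isA_def isR_def by auto

lemma lam_mono:
  assumes "valid_profile (2*k+3) Sa" "valid_profile (2*k+3) Sb"
    "\<forall>i<2*k+3. pv Sa w i \<le> pv Sb w i"
  shows "lam k Sa w \<le> lam k Sb w"
  unfolding lam_def
  by (rule Q_mono) (use assms pv_bounds in blast)

lemma Q2_mono:
  assumes "valid_profile (2*k+3) Sa" "valid_profile (2*k+3) Sb"
    "\<forall>i<2*k+3. pv Sa w i \<le> pv Sb w i"
  shows "Q (pv Sa w) (2*k+2) t \<le> Q (pv Sb w) (2*k+2) t"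
proof (rule Q_mono)
  show "\<forall>i<2*k+2. 0 \<le> pv Sa w i \<and> pv Sa w i \<le> pv Sb w i \<and> pv Sb w i \<le> 1"
    using assms pv_bounds[of "2*k+3"] by (metis add_Suc_right less_SucI numeral_2_eq_2 numeral_3_eq_3)
qed

lemma Q2_bounds:
  assumes "valid_profile (2*k+3) Sa"
  shows "0 \<le> Q (pv Sa w) (2*k+2) t \<and> Q (pv Sa w) (2*k+2) t \<le> 1"
  by (rule Q_bounds) (use assms pv_bounds[of "2*k+3"] in force)

lemma lam_split: "lam k \<Sigma> w = pv \<Sigma> w (2*k+2) * Q (pv \<Sigma> w) (2*k+2) (k+1)
   + (1 - pv \<Sigma> w (2*k+2)) * Q (pv \<Sigma> w) (2*k+2) (k+2)"
proof -
  have e: "2*k+3 = Suc (2*k+2)" "k + 2 - 1 = k+1" by simp_all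
  show ?thesis unfolding lam_def e(1) Q.simps(2)[of "pv \<Sigma> w" "2*k+2" "k+2"] e(2) ..
qed

lemma pureA:
  assumes "\<forall>i<2*k+2. p i = (if isA k i then 1 else 0)"
  shows "Q p (2*k+2) (k+1) = 1" "Q p (2*k+2) (k+2) = 0"
proof -
  let ?S = "insert (2*k+1) {..<k}"
  have S: "?S \<subseteq> {..<2*k+2}" by auto
  have c: "card ?S = k+1" by simp
  have "\<forall>i<2*k+2. p i = (if i \<in> ?S then 1 else 0)" using assms unfolding isA_def by auto
  from Q_pure[OF S this] c show "Q p (2*k+2) (k+1) = 1" "Q p (2*k+2) (k+2) = 0" by auto
qed

lemma topA:
  assumes "\<forall>i<2*k+3. 0 \<le> p i \<and> p i \<le> (if isA k i then 1 else 0)"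
  shows "Q p (2*k+3) (k+2) = 0"
proof -
  let ?S = "insert (2*k+1) {..<k}"
  let ?t = "\<lambda>i. if i \<in> ?S then 1 else (0::real)"
  have S: "?S \<subseteq> {..<2*k+3}" by auto
  have c: "card ?S = k+1" by simp
  have "\<forall>i<2*k+3. ?t i = (if i \<in> ?S then 1 else 0)" by simp
  from Q_pure[OF S this] c have t0: "Q ?t (2*k+3) (k+2) = 0" by auto
  have "\<forall>i<2*k+3. 0 \<le> p i \<and> p i \<le> ?t i \<and> ?t i \<le> 1"
  proof (intro allI impI)
    fix i assume i: "i < 2*k+3"
    have "0 \<le> p i" "p i \<le> (if isA k i then 1 else 0)" using assms i by auto
    thus "0 \<le> p i \<and> p i \<le> ?t i \<and> ?t i \<le> 1" unfolding isA_def by auto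
  qed
  hence "Q p (2*k+3) (k+2) \<le> 0" using Q_mono[of "2*k+3" p ?t "k+2"] t0 by simp
  moreover have "0 \<le> Q p (2*k+3) (k+2)"
    using Q_bounds[of "2*k+3" p "k+2"] assms by (smt (verit))
  ultimately show ?thesis by simp
qed

lemma trade:
  assumes "\<forall>i<2*k. p i = (if i < k then 1 else 0)" "p (2*k) = s" "p (2*k+1) = s" "p (2*k+2) = s"
  shows "Q p (2*k+3) (k+2) = 3*s^2 - 2*s^3"
proof -
  have b: "Q p (2*k) t = (if t \<le> k then 1 else 0)" for t
  proof -
    have "{..<k} \<subseteq> {..<2*k}" by auto
    moreover have "\<forall>i<2*k. p i = (if i \<in> {..<k} then 1 else 0)" using assms(1) by auto
    ultimately show ?thesis using Q_pure[of "{..<k}" "2*k" p t] by simp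
  qed
  have e: "2*k+3 = Suc (Suc (Suc (2*k)))" "2*k+2 = Suc (Suc (2*k))" "2*k+1 = Suc (2*k)" by simp_all
  have "Q p (2*k+3) (k+2) = s * (s * (s * 1 + (1-s) * 1) + (1 - s) * (s * 1 + (1-s) * 0))
     + (1 - s) * (s * (s * 1 + (1 - s) * 0) + (1 - s) * (s * 0 + (1 - s) * 0))"
    unfolding e using assms(2,3,4) unfolding e by (simp add: b Q.simps(2))
  also have "\<dots> = 3*s^2 - 2*s^3" by (simp add: algebra_simps power2_eq_square power3_eq_cube)
  finally show ?thesis .
qed



definition Hs :: "signal \<Rightarrow> real" where "Hs s = (if s = h then 1 else 0)"

lemma pv_Hs: "pv (\<lambda>n. if c n then Hs else \<Sigma> n) w i = (if c i then P0 h w else pv \<Sigma> w i)"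
  unfolding pv_def voteA_prob_def Hs_def P0_def by (cases w; auto)

lemma P0h: "P0 h L = 1/4" "P0 h H = 3/4" unfolding P0_def by auto

lemma valid_upd: "valid_profile N \<Sigma> \<Longrightarrow> (\<forall>n s. 0 \<le> f n s \<and> f n s \<le> 1) \<Longrightarrow>
  valid_profile N (\<lambda>n. if c n then f n else \<Sigma> n)"
  unfolding valid_profile_def by auto

lemma squeeze:
  fixes p a b a1 b1 :: real
  assumes "0 < p" "p < 1" "a \<le> a1" "b \<le> b1" "p*a + (1-p)*b = p*a1 + (1-p)*b1"
  shows "a = a1 \<and> b = b1"
proof -
  have "0 \<le> p * (a1 - a)" "0 \<le> (1-p) * (b1 - b)" using assms by auto
  moreover have "p * (a1 - a) + (1-p) * (b1 - b) = 0" using assms(5) by (simp add: algebra_simps)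
  ultimately have "p * (a1 - a) = 0" "(1-p) * (b1 - b) = 0" by linarith+
  thus ?thesis using assms(1,2) by auto
qed


lemma uu_I2: "uu k (Suc (Suc (2*k))) \<Sigma> = (2 - 2 * lam k \<Sigma> L + lam k \<Sigma> H) / 2"
  using uu_I[of k \<Sigma>] by simp

lemma cover: "i < 2*k+3 \<Longrightarrow> isA k i \<or> isR k i \<or> i = 2*k+2"
  unfolding isA_def isR_def by auto

lemma block:
  assumes V: "valid_profile (2*k+3) \<Sigma>"
  shows "\<exists>D \<Sigma>'. D \<subseteq> {..<2*k+3} \<and> valid_profile (2*k+3) \<Sigma>' \<and>
          (\<forall>n\<in>{..<2*k+3} - D. \<Sigma>' n = \<Sigma> n) \<and>
          (\<forall>n\<in>D. uu k n \<Sigma>' \<ge> uu k n \<Sigma>) \<and>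
          (\<exists>n\<in>D. uu k n \<Sigma>' > uu k n \<Sigma> + 0)"
proof -
  define S1 where "S1 = (\<lambda>n. if isA k n then (\<lambda>s::signal. 1::real) else \<Sigma> n)"
  define S2 where "S2 = (\<lambda>n. if isR k n then (\<lambda>s::signal. 0::real) else \<Sigma> n)"
  define S12 where "S12 = (\<lambda>n. if isA k n then (\<lambda>s::signal. 1::real) else S2 n)"
  have V1: "valid_profile (2*k+3) S1" unfolding S1_def by (rule valid_upd[OF V]) auto
  have V2: "valid_profile (2*k+3) S2" unfolding S2_def by (rule valid_upd[OF V]) auto
  have V12: "valid_profile (2*k+3) S12" unfolding S12_def by (rule valid_upd[OF V2]) auto
  have pS1: "pv S1 w i = (if isA k i then 1 else pv \<Sigma> w i)" for w i unfolding S1_def pv_const ..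
  have pS2: "pv S2 w i = (if isR k i then 0 else pv \<Sigma> w i)" for w i unfolding S2_def pv_const ..
  have pS12: "pv S12 w i = (if isA k i then 1 else if isR k i then 0 else pv \<Sigma> w i)" for w i
    unfolding S12_def pv_const pS2 ..
  have bnd: "0 \<le> pv \<Sigma> w i \<and> pv \<Sigma> w i \<le> 1" if "i < 2*k+3" for w i using pv_bounds[OF V that] .
  have le_2_S: "\<forall>i<2*k+3. pv S2 w i \<le> pv \<Sigma> w i" for w using bnd pS2 by auto
  have le_S_1: "\<forall>i<2*k+3. pv \<Sigma> w i \<le> pv S1 w i" for w using bnd pS1 by auto
  have le_2_12: "\<forall>i<2*k+3. pv S2 w i \<le> pv S12 w i" for w using bnd pS2 pS12 isAR_disj by auto
  have le_12_1: "\<forall>i<2*k+3. pv S12 w i \<le> pv S1 w i" for w using bnd pS1 pS12 by auto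
  have nAR: "\<not> isA k (2*k+2)" "\<not> isR k (2*k+2)" unfolding isA_def isR_def by auto
  have pI1: "pv S1 w (2*k+2) = pv \<Sigma> w (2*k+2)" "pv S2 w (2*k+2) = pv \<Sigma> w (2*k+2)"
    "pv S12 w (2*k+2) = pv \<Sigma> w (2*k+2)" for w using nAR pS1 pS2 pS12 by auto
  have A2k1: "isA k (2*k+1)" and R2k: "isR k (2*k)" unfolding isA_def isR_def by auto
  have G12: "Q (pv S12 w) (2*k+2) (k+1) = 1" "Q (pv S12 w) (2*k+2) (k+2) = 0" for w
  proof -
    have "\<forall>i<2*k+2. pv S12 w i = (if isA k i then 1 else 0)"
      unfolding pS12 isA_def isR_def by auto
    from pureA[OF this] show "Q (pv S12 w) (2*k+2) (k+1) = 1" "Q (pv S12 w) (2*k+2) (k+2) = 0" by auto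
  qed
  show ?thesis
  proof (cases "\<exists>w. lam k S1 w \<noteq> lam k \<Sigma> w")
    case True
    have ge: "lam k \<Sigma> w \<le> lam k S1 w" for w by (rule lam_mono[OF V V1 le_S_1])
    from True obtain w0 where w0: "lam k S1 w0 \<noteq> lam k \<Sigma> w0" by blast
    have strict: "(1 + lam k \<Sigma> L + 3 * lam k \<Sigma> H) / 2 < (1 + lam k S1 L + 3 * lam k S1 H) / 2"
      using ge[of L] ge[of H] w0 by (cases w0) auto
    show ?thesis
    proof (intro exI conjI)
      show "{n \<in> {..<2*k+3}. isA k n} \<subseteq> {..<2*k+3}" by auto
      show "valid_profile (2*k+3) S1" by (rule V1)
      show "\<forall>n\<in>{..<2*k+3} - {n \<in> {..<2*k+3}. isA k n}. S1 n = \<Sigma> n" unfolding S1_def by auto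
      show "\<forall>n\<in>{n \<in> {..<2*k+3}. isA k n}. uu k n S1 \<ge> uu k n \<Sigma>" using strict by (auto simp: uu_A)
      show "\<exists>n\<in>{n \<in> {..<2*k+3}. isA k n}. uu k n S1 > uu k n \<Sigma> + 0"
        using strict A2k1 by (intro bexI[of _ "2*k+1"]) (auto simp: uu_A)
    qed
  next
    case F1: False
    show ?thesis
    proof (cases "\<exists>w. lam k S2 w \<noteq> lam k \<Sigma> w")
      case True
      have ge: "lam k S2 w \<le> lam k \<Sigma> w" for w by (rule lam_mono[OF V2 V le_2_S])
      from True obtain w0 where w0: "lam k S2 w0 \<noteq> lam k \<Sigma> w0" by blast
      have strict: "(5 - 3 * lam k \<Sigma> L - lam k \<Sigma> H) / 2 < (5 - 3 * lam k S2 L - lam k S2 H) / 2"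
        using ge[of L] ge[of H] w0 by (cases w0) auto
      show ?thesis
      proof (intro exI conjI)
        show "{n \<in> {..<2*k+3}. isR k n} \<subseteq> {..<2*k+3}" by auto
        show "valid_profile (2*k+3) S2" by (rule V2)
        show "\<forall>n\<in>{..<2*k+3} - {n \<in> {..<2*k+3}. isR k n}. S2 n = \<Sigma> n" unfolding S2_def by auto
        show "\<forall>n\<in>{n \<in> {..<2*k+3}. isR k n}. uu k n S2 \<ge> uu k n \<Sigma>" using strict by (auto simp: uu_R)
        show "\<exists>n\<in>{n \<in> {..<2*k+3}. isR k n}. uu k n S2 > uu k n \<Sigma> + 0"
          using strict R2k by (intro bexI[of _ "2*k"]) (auto simp: uu_R)
      qed
    next
      case F2: False
      have e1: "lam k S1 w = lam k \<Sigma> w" and e2: "lam k S2 w = lam k \<Sigma> w" for w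
        using F1 F2 by auto
      have e12: "lam k S12 w = lam k \<Sigma> w" for w
        using lam_mono[OF V2 V12 le_2_12, of w] lam_mono[OF V12 V1 le_12_1, of w] e1[of w] e2[of w]
        by linarith
      have lamI: "lam k \<Sigma> w = pv \<Sigma> w (2*k+2)" for w
        using e12[of w] lam_split[of k S12 w] G12[of w] pI1(3)[of w] by simp
      define bl where "bl = \<Sigma> (2*k+2) l"
      define bh where "bh = \<Sigma> (2*k+2) h"
      have bb: "0 \<le> bl" "bl \<le> 1" "0 \<le> bh" "bh \<le> 1" using V unfolding valid_profile_def bl_def bh_def by auto
      have pIL: "pv \<Sigma> L (2*k+2) = 3/4 * bl + 1/4 * bh" and pIH: "pv \<Sigma> H (2*k+2) = 1/4 * bl + 3/4 * bh"
        unfolding pv_def voteA_prob_def P0_def bl_def bh_def by auto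
      show ?thesis
      proof (cases "bl = 1 \<and> bh = 1")
        case True
        have l1: "lam k \<Sigma> L = 1" "lam k \<Sigma> H = 1" using lamI pIL pIH True by auto
        define T where "T = (\<lambda>n. if isR k n \<or> n = 2*k+2 then (\<lambda>s::signal. 0::real) else \<Sigma> n)"
        have VT: "valid_profile (2*k+3) T" unfolding T_def by (rule valid_upd[OF V]) auto
        have pT: "pv T w i = (if isR k i \<or> i = 2*k+2 then 0 else pv \<Sigma> w i)" for w i
          unfolding T_def pv_const ..
        have lT: "lam k T w = 0" for w
          unfolding lam_def
        proof (rule topA, intro allI impI)
          fix i assume i: "i < 2*k+3"
          show "0 \<le> pv T w i \<and> pv T w i \<le> (if isA k i then 1 else 0)"
            using cover[OF i] bnd[OF i] isAR_disj nAR unfolding pT by auto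
        qed
        show ?thesis
        proof (intro exI conjI)
          show "{n \<in> {..<2*k+3}. isR k n \<or> n = 2*k+2} \<subseteq> {..<2*k+3}" by auto
          show "valid_profile (2*k+3) T" by (rule VT)
          show "\<forall>n\<in>{..<2*k+3} - {n \<in> {..<2*k+3}. isR k n \<or> n = 2*k+2}. T n = \<Sigma> n" unfolding T_def by auto
          show "\<forall>n\<in>{n \<in> {..<2*k+3}. isR k n \<or> n = 2*k+2}. uu k n T \<ge> uu k n \<Sigma>"
          proof
            fix n assume "n \<in> {n \<in> {..<2*k+3}. isR k n \<or> n = 2*k+2}"
            hence "isR k n \<or> n = 2*k+2" by auto
            thus "uu k n T \<ge> uu k n \<Sigma>"
            proof
              assume "isR k n" thus ?thesis using l1 lT by (simp add: uu_R)
            next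
              assume n: "n = 2*k+2"
              show ?thesis unfolding n uu_I using l1 lT by simp
            qed
          qed
          have "uu k (2*k+2) T > uu k (2*k+2) \<Sigma> + 0" unfolding uu_I using l1 lT by simp
          thus "\<exists>n\<in>{n \<in> {..<2*k+3}. isR k n \<or> n = 2*k+2}. uu k n T > uu k n \<Sigma> + 0"
            by (intro bexI[of _ "2*k+2"]) auto
        qed
      next
        case NT1: False
        show ?thesis
        proof (cases "bl = 0 \<and> bh = 0")
          case True
          have l0: "lam k \<Sigma> L = 0" "lam k \<Sigma> H = 0" using lamI pIL pIH True by auto
          have p0: "pv \<Sigma> w (2*k+2) = 0" for w using pIL pIH True by (cases w) auto
          define T where "T = (\<lambda>n. if n = 2*k+2 then Hs else S1 n)"
          have VT: "valid_profile (2*k+3) T" unfolding T_def by (rule valid_upd[OF V1]) (auto simp: Hs_def)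
          have pT: "pv T w i = (if i = 2*k+2 then P0 h w else pv S1 w i)" for w i
            unfolding T_def pv_Hs ..
          have lT: "lam k T w = P0 h w" for w
          proof -
            have c: "Q (pv T w) (2*k+2) t = Q (pv S1 w) (2*k+2) t" for t
              by (rule Q_cong) (auto simp: pT)
            have g1: "Q (pv S1 w) (2*k+2) (k+1) = 1"
              using Q2_mono[OF V12 V1 le_12_1, of w "k+1"] G12[of w] Q2_bounds[OF V1, of w "k+1"] by linarith
            have g0: "Q (pv S1 w) (2*k+2) (k+2) = 0"
              using lam_split[of k S1 w] pI1(1)[of w] p0[of w] e1[of w] lamI[of w] by simp
            show ?thesis using lam_split[of k T w] c g1 g0 by (simp add: pT)
          qed
          show ?thesis
          proof (intro exI conjI)
            show "{n \<in> {..<2*k+3}. isA k n \<or> n = 2*k+2} \<subseteq> {..<2*k+3}" by auto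
            show "valid_profile (2*k+3) T" by (rule VT)
            show "\<forall>n\<in>{..<2*k+3} - {n \<in> {..<2*k+3}. isA k n \<or> n = 2*k+2}. T n = \<Sigma> n"
              unfolding T_def S1_def by auto
            show "\<forall>n\<in>{n \<in> {..<2*k+3}. isA k n \<or> n = 2*k+2}. uu k n T \<ge> uu k n \<Sigma>"
              using l0 lT P0h by (auto simp: uu_A uu_I uu_I2)
            show "\<exists>n\<in>{n \<in> {..<2*k+3}. isA k n \<or> n = 2*k+2}. uu k n T > uu k n \<Sigma> + 0"
              using l0 lT P0h by (intro bexI[of _ "2*k+2"]) (auto simp: uu_I uu_I2)
          qed
        next
          case NT0: False
          have pos: "0 < pv \<Sigma> w (2*k+2) \<and> pv \<Sigma> w (2*k+2) < 1" for w
          proof -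
            have "0 < bl \<or> 0 < bh" using NT0 bb by auto
            moreover have "bl < 1 \<or> bh < 1" using NT1 bb by auto
            ultimately show ?thesis using bb pIL pIH by (cases w) auto
          qed
          have key: "Q (pv \<Sigma> w) (2*k+2) (k+1) = 1 \<and> Q (pv \<Sigma> w) (2*k+2) (k+2) = 0" for w
          proof -
            let ?p = "pv \<Sigma> w (2*k+2)"
            let ?g1 = "\<lambda>X. Q (pv X w) (2*k+2) (k+1)"
            let ?g0 = "\<lambda>X. Q (pv X w) (2*k+2) (k+2)"
            have a1: "?g1 \<Sigma> = ?g1 S1 \<and> ?g0 \<Sigma> = ?g0 S1"
              by (rule squeeze[of ?p]) (use pos[of w] Q2_mono[OF V V1 le_S_1] lam_split[of k \<Sigma> w]
                    lam_split[of k S1 w] pI1 e1[of w] in auto)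
            have a2: "?g1 S2 = ?g1 \<Sigma> \<and> ?g0 S2 = ?g0 \<Sigma>"
              by (rule squeeze[of ?p]) (use pos[of w] Q2_mono[OF V2 V le_2_S] lam_split[of k \<Sigma> w]
                    lam_split[of k S2 w] pI1 e2[of w] in auto)
            have "?g1 S2 \<le> ?g1 S12" "?g1 S12 \<le> ?g1 S1" "?g0 S2 \<le> ?g0 S12" "?g0 S12 \<le> ?g0 S1"
              using Q2_mono[OF V2 V12 le_2_12] Q2_mono[OF V12 V1 le_12_1] by auto
            thus ?thesis using a1 a2 G12[of w] by linarith
          qed
          show ?thesis
          proof (cases "bl = 0 \<and> bh = 1")
            case True
            have lS: "lam k \<Sigma> L = 1/4" "lam k \<Sigma> H = 3/4" using lamI pIL pIH True by auto
            have pIs: "pv \<Sigma> w (2*k+2) = P0 h w" for w using pIL pIH True P0h by (cases w) auto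
            define T where "T = (\<lambda>n. if n = 2*k \<or> n = 2*k+1 then Hs else S12 n)"
            have VT: "valid_profile (2*k+3) T" unfolding T_def by (rule valid_upd[OF V12]) (auto simp: Hs_def)
            have pT: "pv T w i = (if i = 2*k \<or> i = 2*k+1 then P0 h w else pv S12 w i)" for w i
              unfolding T_def pv_Hs ..
            have lT: "lam k T w = 3 * (P0 h w)^2 - 2 * (P0 h w)^3" for w
              unfolding lam_def
            proof (rule trade)
              show "\<forall>i<2*k. pv T w i = (if i < k then 1 else 0)"
                unfolding pT pS12 isA_def isR_def by auto
              show "pv T w (2*k) = P0 h w" "pv T w (2*k+1) = P0 h w" unfolding pT by auto
              show "pv T w (2*k+2) = P0 h w" unfolding pT using pI1(3) pIs by simp
            qed
            have lTv: "lam k T L = 5/32" "lam k T H = 27/32" unfolding lT P0h by (simp_all add: power2_eq_square power3_eq_cube)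
            show ?thesis
            proof (intro exI conjI)
              show "{n \<in> {..<2*k+3}. isA k n \<or> isR k n} \<subseteq> {..<2*k+3}" by auto
              show "valid_profile (2*k+3) T" by (rule VT)
              show "\<forall>n\<in>{..<2*k+3} - {n \<in> {..<2*k+3}. isA k n \<or> isR k n}. T n = \<Sigma> n"
              proof
                fix n assume "n \<in> {..<2*k+3} - {n \<in> {..<2*k+3}. isA k n \<or> isR k n}"
                hence "n = 2*k+2" using cover by auto
                thus "T n = \<Sigma> n" unfolding T_def S12_def S2_def using nAR by auto
              qed
              show "\<forall>n\<in>{n \<in> {..<2*k+3}. isA k n \<or> isR k n}. uu k n T \<ge> uu k n \<Sigma>"
                using lS lTv by (auto simp: uu_A uu_R)
              show "\<exists>n\<in>{n \<in> {..<2*k+3}. isA k n \<or> isR k n}. uu k n T > uu k n \<Sigma> + 0"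
                using lS lTv A2k1 by (intro bexI[of _ "2*k+1"]) (auto simp: uu_A)
            qed
          next
            case NT01: False
            define T where "T = (\<lambda>n. if n = 2*k+2 then Hs else \<Sigma> n)"
            have VT: "valid_profile (2*k+3) T" unfolding T_def by (rule valid_upd[OF V]) (auto simp: Hs_def)
            have pT: "pv T w i = (if i = 2*k+2 then P0 h w else pv \<Sigma> w i)" for w i
              unfolding T_def pv_Hs ..
            have lT: "lam k T w = P0 h w" for w
            proof -
              have c: "Q (pv T w) (2*k+2) t = Q (pv \<Sigma> w) (2*k+2) t" for t
                by (rule Q_cong) (auto simp: pT)
              show ?thesis using lam_split[of k T w] c key[of w] by (simp add: pT)
            qed
            have ineq: "2 - 2 * (3/4 * bl + 1/4 * bh) + (1/4 * bl + 3/4 * bh) < 2 - 2 * (1/4) + 3/4"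
            proof (cases "bl = 0")
              case True thus ?thesis using NT01 bb by auto
            next
              case False thus ?thesis using bb by auto
            qed
            show ?thesis
            proof (intro exI conjI)
              show "{2*k+2} \<subseteq> {..<2*k+3}" by auto
              show "valid_profile (2*k+3) T" by (rule VT)
              show "\<forall>n\<in>{..<2*k+3} - {2*k+2}. T n = \<Sigma> n" unfolding T_def by auto
              show "\<forall>n\<in>{2*k+2}. uu k n T \<ge> uu k n \<Sigma>"
                using ineq lT P0h lamI pIL pIH by (auto simp: uu_I uu_I2)
              show "\<exists>n\<in>{2*k+2}. uu k n T > uu k n \<Sigma> + 0"
                using ineq lT P0h lamI pIL pIH by (auto simp: uu_I uu_I2)
            qed
          qed
        qed
      qed
    qed
  qed
qed


theorem theorem1:
  shows "\<forall>N0::nat. \<exists>N Pw P \<mu> B v. N > N0 \<and> voting_instance N Pw P \<mu> B v \<and>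
           \<not> (\<exists>\<Sigma>. eps_strong_BNE N Pw P \<mu> v 0 \<Sigma>)"
proof
  fix N0 :: nat
  let ?k = N0
  have VI: "voting_instance (2*?k+3) Pw0 P0 (mu0 ?k) 3 (v0 ?k)"
  proof -
    have m1: "0 < mu0 ?k" "mu0 ?k < 1" unfolding mu0_def by (auto simp: field_simps)
    have vb: "\<forall>n<2*?k+3. \<forall>w a. v0 ?k n w a \<le> 3"
      unfolding v0_def vA_def vR_def vI_def by (auto split: world.splits alt.splits)
    have vm: "\<forall>n<2*?k+3. v0 ?k n H Acc > v0 ?k n L Acc \<and> v0 ?k n H Rej < v0 ?k n L Rej"
      unfolding v0_def vA_def vR_def vI_def by auto
    have p: "\<forall>s w. 0 \<le> P0 s w" "\<forall>w. P0 l w + P0 h w = 1" "P0 h H > P0 h L" "P0 l H < P0 l L"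
      unfolding P0_def by auto
    show ?thesis unfolding voting_instance_def using m1 vb vm p by (auto simp: Pw0_def)
  qed
  have NB: "\<not> (\<exists>\<Sigma>. eps_strong_BNE (2*?k+3) Pw0 P0 (mu0 ?k) (v0 ?k) 0 \<Sigma>)"
  proof
    assume "\<exists>\<Sigma>. eps_strong_BNE (2*?k+3) Pw0 P0 (mu0 ?k) (v0 ?k) 0 \<Sigma>"
    then obtain \<Sigma> where E: "eps_strong_BNE (2*?k+3) Pw0 P0 (mu0 ?k) (v0 ?k) 0 \<Sigma>" by blast
    hence V: "valid_profile (2*?k+3) \<Sigma>" unfolding eps_strong_BNE_def by simp
    from block[OF V] E show False unfolding eps_strong_BNE_def uu_def by blast
  qed
  show "\<exists>N Pw P \<mu> B v. N > N0 \<and> voting_instance N Pw P \<mu> B v \<and>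
           \<not> (\<exists>\<Sigma>. eps_strong_BNE N Pw P \<mu> v 0 \<Sigma>)"
    by (rule exI[of _ "2*?k+3"], rule exI[of _ Pw0], rule exI[of _ P0], rule exI[of _ "mu0 ?k"],
        rule exI[of _ 3], rule exI[of _ "v0 ?k"]) (use VI NB in auto)
qed

end
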